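(* Let $p>2$ be an even integer such that $p/2$ is odd. Then there exists a subset $\mathcal{X}$ of $\mathbb{P}^2_\circ$ with $|\mathcal{X}|=|B(2,p-1)\cap\mathbb{P}^2_\circ|+1$ and $$\kappa(\mathcal{X})\le\kappa(B(2,p-1)\cap\mathbb{P}^2_\circ)+\frac{p}{2}+1.$$ Moreover, every subset $\mathcal{X}$ of $\mathbb{P}^2_\circ$ with these two properties satisfies at least one of: (i) some point of $B(2,p-1)\cap\mathbb{P}^2_\circ$ is not in $\mathcal{X}$; (ii) some point of $\mathcal{X}$ is not in $B(2,p)\cap\mathbb{P}^2_\circ$.
   Context: A point of $\mathbb{Z}^2$ is primitive if its coordinates are relatively prime; $\mathbb{P}^2_\circ$ denotes the set of primitive points of $\mathbb{Z}^2$ whose first non-zero coordinate is positive. $B(2,p)=\{x\in\mathbb{R}^2:\|x\|_1\le p\}$. For a finite $\mathcal{X}\subset\mathbb{R}^2$, $\kappa(\mathcal{X})=\max_{i\in\{1,2\}}\sum_{x\in\mathcal{X}}|x_i|$. *)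

theory Defs
  imports Main
begin

definition primitive :: "int \<times> int \<Rightarrow> bool" where
  "primitive x \<longleftrightarrow> coprime (fst x) (snd x)"

definition P2o :: "(int \<times> int) set" where
  "P2o = {x. primitive x \<and> (fst x > 0 \<or> (fst x = 0 \<and> snd x > 0))}"

definition B2 :: "int \<Rightarrow> (int \<times> int) set" where
  "B2 p = {x. \<bar>fst x\<bar> + \<bar>snd x\<bar> \<le> p}"

definition kappa :: "(int \<times> int) set \<Rightarrow> int" where
  "kappa X = max (\<Sum>x\<in>X. \<bar>fst x\<bar>) (\<Sum>x\<in>X. \<bar>snd x\<bar>)"

end

theory Submission
  imports Defs
begin

definition gsw :: "int \<times> int \<Rightarrow> int \<times> int" where
  "gsw x = (if snd x \<ge> 0 then (snd x, fst x) else (- snd x, - fst x))"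

lemma gsw_P2o: "x \<in> P2o \<Longrightarrow> gsw x \<in> P2o"
proof -
  assume x: "x \<in> P2o"
  obtain a b where ab: "x = (a,b)" by (cases x)
  have cp: "coprime a b" and s: "a > 0 \<or> (a = 0 \<and> b > 0)" using x ab by (auto simp: P2o_def primitive_def)
  have b0: "b = 0 \<Longrightarrow> a = 1" using cp s by auto
  show ?thesis
    using cp s b0 unfolding ab gsw_def P2o_def primitive_def
    by (auto simp: coprime_commute)
qed

lemma gsw_inv: "x \<in> P2o \<Longrightarrow> gsw (gsw x) = x"
  by (cases x) (auto simp: gsw_def P2o_def primitive_def)

lemma gsw_B2: "gsw x \<in> B2 r \<longleftrightarrow> x \<in> B2 r"
  by (cases x) (auto simp: gsw_def B2_def)

lemma finite_B2: "finite (B2 r)"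
proof -
  have "B2 r \<subseteq> {-r..r} \<times> {-r..r}" by (auto simp: B2_def)
  thus ?thesis by (rule finite_subset) auto
qed

lemma sums_equal:
  "(\<Sum>x\<in>B2 r \<inter> P2o. \<bar>fst x\<bar>) = (\<Sum>x\<in>B2 r \<inter> P2o. \<bar>snd x\<bar>)"
proof -
  let ?S = "B2 r \<inter> P2o"
  have inj: "inj_on gsw ?S" by (metis gsw_inv IntD2 inj_onI)
  have img: "gsw ` ?S = ?S"
  proof
    show "gsw ` ?S \<subseteq> ?S" using gsw_P2o gsw_B2 by auto
    show "?S \<subseteq> gsw ` ?S"
    proof
      fix x assume "x \<in> ?S"
      hence "gsw x \<in> ?S" "gsw (gsw x) = x" using gsw_P2o gsw_B2 gsw_inv by auto
      thus "x \<in> gsw ` ?S" by (metis image_eqI)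
    qed
  qed
  have "(\<Sum>x\<in>?S. \<bar>fst x\<bar>) = (\<Sum>x\<in>gsw ` ?S. \<bar>fst x\<bar>)" using img by simp
  also have "\<dots> = (\<Sum>x\<in>?S. \<bar>fst (gsw x)\<bar>)" using sum.reindex[OF inj] by simp
  also have "\<dots> = (\<Sum>x\<in>?S. \<bar>snd x\<bar>)"
    by (rule sum.cong) (auto simp: gsw_def)
  finally show ?thesis .
qed

theorem proposition5p2:
  fixes p :: int
  assumes "p > 2" and "even p" and "odd (p div 2)"
  shows "(\<exists>X. X \<subseteq> P2o \<and> finite X \<and> card X = card (B2 (p - 1) \<inter> P2o) + 1 \<and>
              kappa X \<le> kappa (B2 (p - 1) \<inter> P2o) + p div 2 + 1)
       \<and> (\<forall>X. X \<subseteq> P2o \<and> finite X \<and> card X = card (B2 (p - 1) \<inter> P2o) + 1 \<and>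
              kappa X \<le> kappa (B2 (p - 1) \<inter> P2o) + p div 2 + 1 \<longrightarrow>
              ((\<exists>x\<in>B2 (p - 1) \<inter> P2o. x \<notin> X) \<or> (\<exists>x\<in>X. x \<notin> B2 p \<inter> P2o)))"
proof -
  define S where "S = B2 (p - 1) \<inter> P2o"
  define q where "q = p div 2"
  have pq: "p = 2 * q" using assms(2) q_def by auto
  have q3: "q \<ge> 3" using assms(1,3) pq q_def by presburger
  have oq: "odd q" using assms(3) q_def by simp
  have finS: "finite S" using finite_B2 S_def by auto
  define K1 where "K1 = (\<Sum>x\<in>S. \<bar>fst x\<bar>)"
  define K2 where "K2 = (\<Sum>x\<in>S. \<bar>snd x\<bar>)"
  have K: "K1 = K2" using sums_equal K1_def K2_def S_def by simp
  have kS: "kappa S = K1" using K by (simp add: kappa_def K1_def K2_def)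
  have part1: "\<exists>X. X \<subseteq> P2o \<and> finite X \<and> card X = card S + 1 \<and> kappa X \<le> kappa S + q + 1"
  proof -
    define z where "z = ((1::int), p - 2)"
    define u where "u = ((1::int), p - 1)"
    define v where "v = (q + 1, q)"
    have zS: "z \<in> S" using assms(1) by (auto simp: z_def S_def B2_def P2o_def primitive_def)
    have uP: "u \<in> P2o" by (auto simp: u_def P2o_def primitive_def)
    have vP: "v \<in> P2o" using q3 by (auto simp: v_def P2o_def primitive_def)
    have uS: "u \<notin> S" using assms(1) by (auto simp: u_def S_def B2_def)
    have vS: "v \<notin> S" using q3 pq by (auto simp: v_def S_def B2_def)
    have uv: "u \<noteq> v" using q3 by (auto simp: u_def v_def)
    define X where "X = insert u (insert v (S - {z}))"
    have XP: "X \<subseteq> P2o" using uP vP by (auto simp: X_def S_def)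
    have finX: "finite X" using finS by (simp add: X_def)
    have cS: "card S \<ge> 1" using finS zS by (metis One_nat_def Suc_leI card_gt_0_iff empty_iff)
    have cX: "card X = card S + 1"
      using finS zS uS vS uv cS by (simp add: X_def card_insert_if)
    have s1: "(\<Sum>x\<in>X. \<bar>fst x\<bar>) = \<bar>fst u\<bar> + \<bar>fst v\<bar> + K1 - \<bar>fst z\<bar>"
      using finS zS uS vS uv by (simp add: X_def K1_def sum.remove[OF finS zS])
    have s2: "(\<Sum>x\<in>X. \<bar>snd x\<bar>) = \<bar>snd u\<bar> + \<bar>snd v\<bar> + K2 - \<bar>snd z\<bar>"
      using finS zS uS vS uv by (simp add: X_def K2_def sum.remove[OF finS zS])
    have "kappa X \<le> kappa S + q + 1"
      using s1 s2 K kS q3 pq by (simp add: kappa_def u_def v_def z_def)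
    thus ?thesis using XP finX cX by blast
  qed
  have part2: "\<forall>X. X \<subseteq> P2o \<and> finite X \<and> card X = card S + 1 \<and> kappa X \<le> kappa S + q + 1 \<longrightarrow>
              ((\<exists>x\<in>S. x \<notin> X) \<or> (\<exists>x\<in>X. x \<notin> B2 p \<inter> P2o))"
  proof (intro allI impI, rule ccontr)
    fix X assume h: "X \<subseteq> P2o \<and> finite X \<and> card X = card S + 1 \<and> kappa X \<le> kappa S + q + 1"
      and n: "\<not> ((\<exists>x\<in>S. x \<notin> X) \<or> (\<exists>x\<in>X. x \<notin> B2 p \<inter> P2o))"
    have SX: "S \<subseteq> X" and XB: "X \<subseteq> B2 p \<inter> P2o" using n by auto
    have finX: "finite X" using h by blast
    have "card (X - S) = 1" using h card_Diff_subset[OF finS SX] by simp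
    then obtain y where y: "X - S = {y}" by (auto simp: card_Suc_eq)
    have Xeq: "X = insert y S" and yS: "y \<notin> S" using y SX by auto
    have yB: "y \<in> B2 p \<inter> P2o" using XB Xeq by auto
    have yl: "\<bar>fst y\<bar> + \<bar>snd y\<bar> = p" using yB yS by (auto simp: S_def B2_def)
    have cp: "coprime (fst y) (snd y)" using yB by (auto simp: P2o_def primitive_def)
    have s1: "(\<Sum>x\<in>X. \<bar>fst x\<bar>) = \<bar>fst y\<bar> + K1" using Xeq finS yS by (simp add: K1_def)
    have s2: "(\<Sum>x\<in>X. \<bar>snd x\<bar>) = \<bar>snd y\<bar> + K2" using Xeq finS yS by (simp add: K2_def)
    have b1: "\<bar>fst y\<bar> \<le> q + 1" and b2: "\<bar>snd y\<bar> \<le> q + 1"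
      using h s1 s2 kS K by (auto simp: kappa_def)
    consider "\<bar>fst y\<bar> = q" | "\<bar>fst y\<bar> = q - 1" | "\<bar>fst y\<bar> = q + 1" using b1 b2 yl pq by linarith
    thus False
    proof cases
      case 1
      hence "q dvd \<bar>fst y\<bar>" "q dvd \<bar>snd y\<bar>" using yl pq by auto
      hence "q dvd fst y" "q dvd snd y" by simp_all
      hence "is_unit q" using cp coprime_common_divisor by blast
      thus False using q3 by auto
    next
      case 2
      hence "\<bar>snd y\<bar> = q + 1" using yl pq by linarith
      hence "2 dvd \<bar>fst y\<bar>" "2 dvd \<bar>snd y\<bar>" using 2 oq by auto
      hence "2 dvd fst y" "2 dvd snd y" by simp_all
      hence "is_unit (2::int)" using cp coprime_common_divisor by blast
      thus False by auto
    next
      case 3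
      hence "\<bar>snd y\<bar> = q - 1" using yl pq by linarith
      hence "2 dvd \<bar>fst y\<bar>" "2 dvd \<bar>snd y\<bar>" using 3 oq by auto
      hence "2 dvd fst y" "2 dvd snd y" by simp_all
      hence "is_unit (2::int)" using cp coprime_common_divisor by blast
      thus False by auto
    qed
  qed
  show ?thesis using part1 part2 unfolding S_def q_def by blast
qed

end
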